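(* Let $C\subseteq\Pr(\mathbb{T})$ be minimal with respect to being compact, convex, closed under $\hat{}$, and nonempty, and let $\preceq$ be a linear quasi-order on $\mathbb{T}$ such that $s\prec s\,\hat{}\,t$ and $t\prec s\,\hat{}\,t$ for all $s,t\in\mathbb{T}$. Then either (i) for every $\mu\in C$ and every incompatible pair $\sigma<_{\mathrm{lex}}\varsigma$ of finite binary sequences, $\mu$-almost every $t$ satisfies $t/\sigma\prec t/\varsigma$; or (ii) for every $\mu\in C$ and every incompatible pair $\sigma<_{\mathrm{lex}}\varsigma$ of finite binary sequences, $\mu$-almost every $t$ satisfies $t/\varsigma\prec t/\sigma$.
   Context: For $a,b\subseteq(0,1]$ put $a\,\hat{}\,b=\tfrac12 a\cup\tfrac12(b+1)$; $\mathbb{T}$ is the set generated from $\mathbf{1}=\{1\}$ by $\hat{}$ (free binary system on one generator; each $t\neq\mathbf1$ is uniquely $a\,\hat{}\,b$). $\Pr(\mathbb{T})$ is the set of finitely additive probability measures on $\mathbb{T}$, viewed as positive normalized functionals on $\ell^\infty(\mathbb{T})$ with the weak* topology; $(\mu\,\hat{}\,\nu)(f)=\int\int f(x\,\hat{}\,y)\,d\nu(y)\,d\mu(x)$, and $C$ is closed under $\hat{}$ if $\mu\,\hat{}\,\nu\in C$ for $\mu,\nu\in C$. A linear quasi-order is a reflexive transitive relation in which any two elements are comparable; $s\prec t$ means $s\preceq t$ and not $t\preceq s$. For a finite binary sequence $\sigma$, $t/\sigma$ is the subterm at address $\sigma$: $t/\emptyset=t$, $(a\,\hat{}\,b)/0\sigma=a/\sigma$,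 $(a\,\hat{}\,b)/1\sigma=b/\sigma$ (undefined otherwise). Two sequences are incompatible if neither is an initial segment of the other; $<_{\mathrm{lex}}$ is lexicographic order. "$\mu$-almost every $t$ satisfies $P$" means the set of $t$ for which the relevant subterms are defined and $P$ holds has $\mu$-measure $1$. *)

theory Defs
  imports "HOL-Analysis.Analysis"
begin

text \<open>The free binary system on one generator: One is the generator 1,
  Node a b is a hat b.\<close>
datatype tree = One | Node tree tree

definition bdd_fun :: "(tree \<Rightarrow> real) \<Rightarrow> bool" where
  "bdd_fun f \<longleftrightarrow> (\<exists>B. \<forall>t. \<bar>f t\<bar> \<le> B)"

text \<open>Finitely additive probability measures on T, as positive normalized linear
  functionals on l-infinity of T (extended by 0 outside l-infinity, for uniqueness).\<close>
definition is_prob :: "((tree \<Rightarrow> real) \<Rightarrow> real) \<Rightarrow> bool" where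
  "is_prob \<mu> \<longleftrightarrow>
     (\<forall>f g a b. bdd_fun f \<and> bdd_fun g \<longrightarrow> \<mu> (\<lambda>t. a * f t + b * g t) = a * \<mu> f + b * \<mu> g)
   \<and> (\<forall>f. bdd_fun f \<and> (\<forall>t. 0 \<le> f t) \<longrightarrow> 0 \<le> \<mu> f)
   \<and> \<mu> (\<lambda>_. 1) = 1
   \<and> (\<forall>f. \<not> bdd_fun f \<longrightarrow> \<mu> f = 0)"

definition Pr :: "((tree \<Rightarrow> real) \<Rightarrow> real) set" where
  "Pr = {\<mu>. is_prob \<mu>}"

definition hat_meas :: "((tree \<Rightarrow> real) \<Rightarrow> real) \<Rightarrow> ((tree \<Rightarrow> real) \<Rightarrow> real) \<Rightarrow> ((tree \<Rightarrow> real) \<Rightarrow> real)" where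
  "hat_meas \<mu> \<nu> = (\<lambda>f. if bdd_fun f then \<mu> (\<lambda>x. \<nu> (\<lambda>y. f (Node x y))) else 0)"

definition closed_hat :: "((tree \<Rightarrow> real) \<Rightarrow> real) set \<Rightarrow> bool" where
  "closed_hat C \<longleftrightarrow> (\<forall>\<mu>\<in>C. \<forall>\<nu>\<in>C. hat_meas \<mu> \<nu> \<in> C)"

definition convex_meas :: "((tree \<Rightarrow> real) \<Rightarrow> real) set \<Rightarrow> bool" where
  "convex_meas C \<longleftrightarrow> (\<forall>\<mu>\<in>C. \<forall>\<nu>\<in>C. \<forall>a::real. 0 \<le> a \<and> a \<le> 1 \<longrightarrow>
      (\<lambda>f. a * \<mu> f + (1 - a) * \<nu> f) \<in> C)"

text \<open>Compactness is w.r.t. the product (pointwise) topology on functionals, which on Pr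
  coincides with the weak* topology (values at unbounded f are constantly 0 on Pr).\<close>
definition good_set :: "((tree \<Rightarrow> real) \<Rightarrow> real) set \<Rightarrow> bool" where
  "good_set C \<longleftrightarrow> C \<subseteq> Pr \<and> compact C \<and> convex_meas C \<and> closed_hat C \<and> C \<noteq> {}"

definition minimal_good :: "((tree \<Rightarrow> real) \<Rightarrow> real) set \<Rightarrow> bool" where
  "minimal_good C \<longleftrightarrow> good_set C \<and> (\<forall>D. D \<subseteq> C \<and> good_set D \<longrightarrow> D = C)"

definition linear_qo :: "(tree \<Rightarrow> tree \<Rightarrow> bool) \<Rightarrow> bool" where
  "linear_qo le \<longleftrightarrow> (\<forall>x. le x x) \<and> (\<forall>x y z. le x y \<and> le y z \<longrightarrow> le x z)
     \<and> (\<forall>x y. le x y \<or> le y x)"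

definition strict :: "(tree \<Rightarrow> tree \<Rightarrow> bool) \<Rightarrow> tree \<Rightarrow> tree \<Rightarrow> bool" where
  "strict le s t \<longleftrightarrow> le s t \<and> \<not> le t s"

text \<open>Subterm at an address; False = 0 (left), True = 1 (right).\<close>
fun subterm :: "tree \<Rightarrow> bool list \<Rightarrow> tree option" where
  "subterm t [] = Some t"
| "subterm (Node a b) (False # s) = subterm a s"
| "subterm (Node a b) (True # s) = subterm b s"
| "subterm One (_ # _) = None"

definition incompatible :: "bool list \<Rightarrow> bool list \<Rightarrow> bool" where
  "incompatible s r \<longleftrightarrow> \<not> (\<exists>u. r = s @ u) \<and> \<not> (\<exists>u. s = r @ u)"

definition lex_less :: "bool list \<Rightarrow> bool list \<Rightarrow> bool" where
  "lex_less s r \<longleftrightarrow> (s, r) \<in> lexord {(False, True)}"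

definition ae_sub :: "((tree \<Rightarrow> real) \<Rightarrow> real) \<Rightarrow> bool list \<Rightarrow> bool list \<Rightarrow> (tree \<Rightarrow> tree \<Rightarrow> bool) \<Rightarrow> bool" where
  "ae_sub \<mu> s r P \<longleftrightarrow>
     \<mu> (\<lambda>t. if (\<exists>a b. subterm t s = Some a \<and> subterm t r = Some b \<and> P a b) then 1 else 0) = 1"

end

theory Submission
  imports Defs
begin


definition ind :: "(tree \<Rightarrow> bool) \<Rightarrow> tree \<Rightarrow> real" where
  "ind P = (\<lambda>t. if P t then 1 else 0)"

lemma bdd01: "(\<And>t. 0 \<le> f t \<and> f t \<le> (1::real)) \<Longrightarrow> bdd_fun f"
  unfolding bdd_fun_def by (rule exI[of _ 1]) (metis abs_of_nonneg)

lemma ind01[simp]: "0 \<le> ind P t \<and> ind P t \<le> 1"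
  unfolding ind_def by auto

lemma bdd_ind[simp]: "bdd_fun (ind P)"
  by (rule bdd01) simp

lemma prob_lin: "is_prob \<mu> \<Longrightarrow> bdd_fun f \<Longrightarrow> bdd_fun g \<Longrightarrow>
   \<mu> (\<lambda>t. a * f t + b * g t) = a * \<mu> f + b * \<mu> g"
  unfolding is_prob_def by blast

lemma prob_one: "is_prob \<mu> \<Longrightarrow> \<mu> (\<lambda>_. 1) = 1"
  unfolding is_prob_def by blast

lemma bdd_one: "bdd_fun (\<lambda>_::tree. 1::real)" by (auto simp: bdd_fun_def)

lemma prob_const: "is_prob \<mu> \<Longrightarrow> \<mu> (\<lambda>_. c) = c"
proof -
  assume p: "is_prob \<mu>"
  have "\<mu> (\<lambda>t. c * 1 + 0 * 1) = c * \<mu> (\<lambda>_. 1) + 0 * \<mu> (\<lambda>_. 1)"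
    using prob_lin[OF p bdd_one bdd_one] .
  then show ?thesis using prob_one[OF p] by simp
qed

lemma bdd_comb: "bdd_fun f \<Longrightarrow> bdd_fun g \<Longrightarrow> bdd_fun (\<lambda>t. a * f t + b * g t)"
proof -
  assume "bdd_fun f" "bdd_fun g"
  then obtain B1 B2 where b1: "\<forall>t. \<bar>f t\<bar> \<le> B1" and b2: "\<forall>t. \<bar>g t\<bar> \<le> B2"
    unfolding bdd_fun_def by blast
  have "\<forall>t. \<bar>a * f t + b * g t\<bar> \<le> \<bar>a\<bar> * B1 + \<bar>b\<bar> * B2"
  proof
    fix t
    have "\<bar>a * f t + b * g t\<bar> \<le> \<bar>a\<bar> * \<bar>f t\<bar> + \<bar>b\<bar> * \<bar>g t\<bar>"
      by (metis abs_mult abs_triangle_ineq)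
    also have "\<dots> \<le> \<bar>a\<bar> * B1 + \<bar>b\<bar> * B2"
      using b1 b2 by (intro add_mono mult_left_mono) auto
    finally show "\<bar>a * f t + b * g t\<bar> \<le> \<bar>a\<bar> * B1 + \<bar>b\<bar> * B2" .
  qed
  then show ?thesis unfolding bdd_fun_def by blast
qed

lemma prob_mono: "is_prob \<mu> \<Longrightarrow> bdd_fun f \<Longrightarrow> bdd_fun g \<Longrightarrow> (\<And>t. f t \<le> g t) \<Longrightarrow> \<mu> f \<le> \<mu> g"
proof -
  assume p: "is_prob \<mu>" and bf: "bdd_fun f" and bg: "bdd_fun g" and le: "\<And>t. f t \<le> g t"
  have e: "\<mu> (\<lambda>t. 1 * g t + (-1) * f t) = 1 * \<mu> g + (-1) * \<mu> f" using prob_lin[OF p bg bf] .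
  have "0 \<le> \<mu> (\<lambda>t. 1 * g t + (-1) * f t)"
    using p bdd_comb[OF bg bf, of 1 "-1"] le unfolding is_prob_def
    by (smt (verit, best))
  then show ?thesis using e by simp
qed

lemma prob_01: "is_prob \<mu> \<Longrightarrow> (\<And>t. 0 \<le> f t \<and> f t \<le> 1) \<Longrightarrow> 0 \<le> \<mu> f \<and> \<mu> f \<le> 1"
proof -
  assume p: "is_prob \<mu>" and h: "\<And>t. 0 \<le> f t \<and> f t \<le> 1"
  have "\<mu> (\<lambda>_. 0) \<le> \<mu> f" by (rule prob_mono[OF p _ bdd01[OF h]]) (auto simp: bdd_fun_def h)
  moreover have "\<mu> f \<le> \<mu> (\<lambda>_. 1)" by (rule prob_mono[OF p bdd01[OF h] bdd_one]) (use h in auto)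
  ultimately show ?thesis using prob_const[OF p] by simp
qed

lemma mono01: "is_prob \<mu> \<Longrightarrow> (\<And>t. 0 \<le> f t \<and> f t \<le> 1) \<Longrightarrow> (\<And>t. 0 \<le> g t \<and> g t \<le> 1)
   \<Longrightarrow> (\<And>t. f t \<le> g t) \<Longrightarrow> \<mu> f \<le> \<mu> g"
  by (rule prob_mono) (auto intro: bdd01)

lemma prob_scale: "is_prob \<mu> \<Longrightarrow> bdd_fun f \<Longrightarrow> \<mu> (\<lambda>t. c * f t) = c * \<mu> f"
  using prob_lin[of \<mu> f f c 0] by simp

lemma prob_compl: "is_prob \<mu> \<Longrightarrow> \<mu> (ind (\<lambda>t. \<not> U t)) = 1 - \<mu> (ind U)"
proof -
  assume p: "is_prob \<mu>"
  have "ind (\<lambda>t. \<not> U t) = (\<lambda>t. 1 * 1 + (-1) * ind U t)" unfolding ind_def by auto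
  then show ?thesis using prob_lin[OF p bdd_one bdd_ind, of 1 "-1" U] prob_one[OF p] by simp
qed

lemma hat_eq: "bdd_fun f \<Longrightarrow> hat_meas \<mu> \<nu> f = \<mu> (\<lambda>x. \<nu> (\<lambda>y. f (Node x y)))"
  by (simp add: hat_meas_def)

lemma closed_ge: "closed {\<mu>::(tree \<Rightarrow> real) \<Rightarrow> real. c \<le> \<mu> f}"
  by (rule closed_Collect_le) (auto intro: continuous_on_const)

lemma closed_eq: "closed {\<mu>::(tree \<Rightarrow> real) \<Rightarrow> real. \<mu> f = c}"
  by (rule closed_Collect_eq) (auto intro: continuous_on_const)



locale S =
  fixes C :: "((tree \<Rightarrow> real) \<Rightarrow> real) set" and le :: "tree \<Rightarrow> tree \<Rightarrow> bool"
  assumes min: "minimal_good C" and lq: "linear_qo le"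
    and grow: "\<And>s t. strict le s (Node s t) \<and> strict le t (Node s t)"
begin

lemma good: "good_set C" using min unfolding minimal_good_def by blast
lemma CPr: "\<mu> \<in> C \<Longrightarrow> is_prob \<mu>" using good unfolding good_set_def Pr_def by auto
lemma Chat: "\<mu> \<in> C \<Longrightarrow> \<nu> \<in> C \<Longrightarrow> hat_meas \<mu> \<nu> \<in> C"
  using good unfolding good_set_def closed_hat_def by auto
lemma Cconv: "\<mu> \<in> C \<Longrightarrow> \<nu> \<in> C \<Longrightarrow> 0 \<le> a \<Longrightarrow> a \<le> 1 \<Longrightarrow> (\<lambda>f. a * \<mu> f + (1 - a) * \<nu> f) \<in> C"
  using good unfolding good_set_def convex_meas_def by auto
lemma Cne: "C \<noteq> {}" using good unfolding good_set_def by auto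
lemma Ccomp: "compact C" using good unfolding good_set_def by auto

lemma GL:
  assumes cl: "closed {\<mu>. P \<mu>}"
    and cv: "\<And>\<mu> \<nu> a. \<mu> \<in> C \<Longrightarrow> \<nu> \<in> C \<Longrightarrow> P \<mu> \<Longrightarrow> P \<nu> \<Longrightarrow> 0 \<le> a \<Longrightarrow> a \<le> 1
              \<Longrightarrow> P (\<lambda>f. a * \<mu> f + (1 - a) * \<nu> f)"
    and ht: "\<And>\<mu> \<nu>. \<mu> \<in> C \<Longrightarrow> \<nu> \<in> C \<Longrightarrow> P \<mu> \<Longrightarrow> P \<nu> \<Longrightarrow> P (hat_meas \<mu> \<nu>)"
    and ex: "\<exists>\<mu>\<in>C. P \<mu>"
    and m: "\<mu> \<in> C"
  shows "P \<mu>"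
proof -
  let ?D = "C \<inter> {\<mu>. P \<mu>}"
  have "good_set ?D"
    unfolding good_set_def convex_meas_def closed_hat_def
    using good compact_Int_closed[OF Ccomp cl] cv ht ex Chat Cconv unfolding good_set_def
    by auto
  then have "?D = C" using min unfolding minimal_good_def by blast
  then show ?thesis using m by blast
qed

lemma GL':
  assumes cl: "closed {\<mu>. P \<mu>}"
    and cv: "\<And>\<mu> \<nu> a. \<mu> \<in> C \<Longrightarrow> \<nu> \<in> C \<Longrightarrow> P \<mu> \<Longrightarrow> P \<nu> \<Longrightarrow> 0 \<le> a \<Longrightarrow> a \<le> 1
              \<Longrightarrow> P (\<lambda>f. a * \<mu> f + (1 - a) * \<nu> f)"
    and ht: "\<And>\<mu> \<nu>. \<mu> \<in> C \<Longrightarrow> \<nu> \<in> C \<Longrightarrow> P (hat_meas \<mu> \<nu>)"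
    and m: "\<mu> \<in> C"
  shows "P \<mu>"
proof -
  obtain \<nu> where "\<nu> \<in> C" using Cne by blast
  then have "\<exists>\<mu>\<in>C. P \<mu>" using ht Chat by blast
  then show ?thesis using GL[OF cl cv ht _ m] by blast
qed

lemma cv_eq: "0 \<le> a \<Longrightarrow> a \<le> 1 \<Longrightarrow> x = c \<Longrightarrow> y = c \<Longrightarrow> a * x + (1 - a) * y = (c::real)"
  by (simp add: algebra_simps)

lemma cv_ge: "0 \<le> a \<Longrightarrow> a \<le> 1 \<Longrightarrow> c \<le> x \<Longrightarrow> c \<le> y \<Longrightarrow> c \<le> a * x + (1 - a) * (y::real)"
proof -
  assume "0 \<le> a" "a \<le> 1" "c \<le> x" "c \<le> y"
  then have "a * c \<le> a * x" "(1 - a) * c \<le> (1 - a) * y" by (auto intro: mult_left_mono)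
  then show ?thesis by (simp add: algebra_simps)
qed

lemma qrefl: "le x x" using lq unfolding linear_qo_def by blast
lemma qtrans: "le x y \<Longrightarrow> le y z \<Longrightarrow> le x z" using lq unfolding linear_qo_def by blast
lemma total: "le x y \<or> le y x" using lq unfolding linear_qo_def by blast
lemma st1: "le a b \<Longrightarrow> strict le b c \<Longrightarrow> strict le a c"
  unfolding strict_def using qtrans by blast
lemma st2: "strict le a b \<Longrightarrow> le b c \<Longrightarrow> strict le a c"
  unfolding strict_def using qtrans by blast
lemma stle: "strict le a b \<Longrightarrow> le a b" unfolding strict_def by blast
lemma nst: "\<not> strict le a b \<Longrightarrow> le b a" unfolding strict_def using total by blast
lemma gl: "le s (Node s t)" using grow stle by blast
lemma gr: "le t (Node s t)" using grow stle by blast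

definition up :: "(tree \<Rightarrow> bool) \<Rightarrow> bool" where
  "up U \<longleftrightarrow> (\<forall>s t. U s \<and> le s t \<longrightarrow> U t)"
definition down :: "(tree \<Rightarrow> bool) \<Rightarrow> bool" where
  "down U \<longleftrightarrow> (\<forall>s t. U t \<and> le s t \<longrightarrow> U s)"

lemma up_ge: assumes u: "up U" and n: "\<nu> \<in> C" and m: "\<mu> \<in> C"
  shows "\<nu> (ind U) \<le> \<mu> (ind U)"
proof (rule GL[where P = "\<lambda>\<mu>. \<nu> (ind U) \<le> \<mu> (ind U)", OF closed_ge _ _ _ m])
  show "\<exists>\<mu>\<in>C. \<nu> (ind U) \<le> \<mu> (ind U)" using n by blast
next
  fix \<mu> \<nu>' and a :: real assume "0 \<le> a" "a \<le> 1" "\<nu> (ind U) \<le> \<mu> (ind U)" "\<nu> (ind U) \<le> \<nu>' (ind U)"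
  then show "\<nu> (ind U) \<le> a * \<mu> (ind U) + (1 - a) * \<nu>' (ind U)" by (rule cv_ge)
next
  fix \<mu>1 \<mu>2 assume c: "\<mu>1 \<in> C" "\<mu>2 \<in> C" and h: "\<nu> (ind U) \<le> \<mu>1 (ind U)"
  have p1: "is_prob \<mu>1" and p2: "is_prob \<mu>2" using c CPr by auto
  have "\<mu>1 (ind U) = \<mu>1 (\<lambda>x. \<mu>2 (\<lambda>y. ind U x))" using prob_const[OF p2] by simp
  also have "\<dots> \<le> \<mu>1 (\<lambda>x. \<mu>2 (\<lambda>y. ind U (Node x y)))"
  proof (rule mono01[OF p1])
    fix x
    show "0 \<le> \<mu>2 (\<lambda>y. ind U x) \<and> \<mu>2 (\<lambda>y. ind U x) \<le> 1" by (rule prob_01[OF p2]) simp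
    show "0 \<le> \<mu>2 (\<lambda>y. ind U (Node x y)) \<and> \<mu>2 (\<lambda>y. ind U (Node x y)) \<le> 1" by (rule prob_01[OF p2]) simp
    show "\<mu>2 (\<lambda>y. ind U x) \<le> \<mu>2 (\<lambda>y. ind U (Node x y))"
      by (rule mono01[OF p2]) (use u gl in \<open>auto simp: ind_def up_def\<close>)
  qed
  also have "\<dots> = hat_meas \<mu>1 \<mu>2 (ind U)" by (simp add: hat_eq)
  finally show "\<nu> (ind U) \<le> hat_meas \<mu>1 \<mu>2 (ind U)" using h by simp
qed

definition mu0 where "mu0 = (SOME \<mu>. \<mu> \<in> C)"
lemma mu0C: "mu0 \<in> C" unfolding mu0_def using Cne some_in_eq by blast
lemma p0: "is_prob mu0" using mu0C CPr by blast

definition piM where "piM U = mu0 (ind U)"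
definition invs where "invs U \<longleftrightarrow> (\<forall>\<mu>\<in>C. \<mu> (ind U) = piM U)"

lemma up_inv: "up U \<Longrightarrow> invs U"
  unfolding invs_def piM_def using up_ge mu0C by (meson order_antisym)

lemma inv_compl: "invs U \<Longrightarrow> invs (\<lambda>t. \<not> U t)"
  unfolding invs_def piM_def
proof
  fix \<mu> assume h: "\<forall>\<mu>\<in>C. \<mu> (ind U) = mu0 (ind U)" and m: "\<mu> \<in> C"
  show "\<mu> (ind (\<lambda>t. \<not> U t)) = mu0 (ind (\<lambda>t. \<not> U t))"
    using prob_compl[OF CPr[OF m]] prob_compl[OF p0] h m by simp
qed

lemma down_inv: "down U \<Longrightarrow> invs U"
proof -
  assume d: "down U"
  have "up (\<lambda>t. \<not> U t)" using d unfolding up_def down_def by blast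
  then have "invs (\<lambda>t. \<not> \<not> U t)" using up_inv inv_compl by blast
  then show ?thesis by simp
qed

lemma pi01: "0 \<le> piM U \<and> piM U \<le> 1" unfolding piM_def using prob_01[OF p0] by simp
lemma pi_mono: "(\<And>t. U t \<Longrightarrow> V t) \<Longrightarrow> piM U \<le> piM V"
  unfolding piM_def by (rule mono01[OF p0]) (auto simp: ind_def)
lemma pi_compl: "piM (\<lambda>t. \<not> U t) = 1 - piM U" unfolding piM_def using prob_compl[OF p0] .

end


definition hsub :: "bool list \<Rightarrow> (tree \<Rightarrow> bool) \<Rightarrow> tree \<Rightarrow> real" where
  "hsub \<tau> U = (\<lambda>t. if \<exists>a. subterm t \<tau> = Some a \<and> U a then 1 else 0)"

definition Ind :: "(tree \<Rightarrow> tree \<Rightarrow> bool) \<Rightarrow> bool list \<Rightarrow> bool list \<Rightarrow> tree \<Rightarrow> real" where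
  "Ind R s r = (\<lambda>t. if \<exists>a b. subterm t s = Some a \<and> subterm t r = Some b \<and> R a b then 1 else 0)"

lemma hsub01[simp]: "0 \<le> hsub \<tau> U t \<and> hsub \<tau> U t \<le> 1" unfolding hsub_def by auto
lemma Ind01[simp]: "0 \<le> Ind R s r t \<and> Ind R s r t \<le> 1" unfolding Ind_def by auto

lemma zero_one: "0 \<le> (k::real) \<Longrightarrow> k \<le> 1 \<Longrightarrow> k \<le> k * k \<Longrightarrow> k = 0 \<or> k = 1"
proof -
  assume a: "0 \<le> k" "k \<le> 1" "k \<le> k * k"
  have "0 \<le> k * (1 - k)" using a by simp
  moreover have "k * (1 - k) \<le> 0" using a by (simp add: algebra_simps)
  ultimately have "k * (1 - k) = 0" by linarith
  then show ?thesis by simp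
qed

lemma lex_decomp: "incompatible \<sigma> \<tau> \<Longrightarrow> lex_less \<sigma> \<tau> \<Longrightarrow> \<exists>u v w. \<sigma> = u @ False # v \<and> \<tau> = u @ True # w"
  unfolding incompatible_def lex_less_def lexord_def by auto

context S
begin

lemma sub_inv: "invs U \<Longrightarrow> \<mu> \<in> C \<Longrightarrow> \<mu> (hsub \<tau> U) = piM U"
proof (induction \<tau> arbitrary: \<mu>)
  case Nil
  have "hsub [] U = ind U" unfolding hsub_def ind_def by simp
  then show ?case using Nil unfolding invs_def by simp
next
  case (Cons b \<tau>)
  show ?case
  proof (rule GL'[where P = "\<lambda>\<mu>. \<mu> (hsub (b # \<tau>) U) = piM U", OF closed_eq _ _ Cons.prems(2)])
    fix \<mu> \<nu> and a :: real
    assume "0 \<le> a" "a \<le> 1" "\<mu> (hsub (b # \<tau>) U) = piM U" "\<nu> (hsub (b # \<tau>) U) = piM U"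
    then show "a * \<mu> (hsub (b # \<tau>) U) + (1 - a) * \<nu> (hsub (b # \<tau>) U) = piM U" by (rule cv_eq)
  next
    fix \<mu>1 \<mu>2 assume c: "\<mu>1 \<in> C" "\<mu>2 \<in> C"
    have p1: "is_prob \<mu>1" and p2: "is_prob \<mu>2" using c CPr by auto
    have e: "hat_meas \<mu>1 \<mu>2 (hsub (b # \<tau>) U) = \<mu>1 (\<lambda>x. \<mu>2 (\<lambda>y. hsub (b # \<tau>) U (Node x y)))"
      by (rule hat_eq) (rule bdd01, simp)
    show "hat_meas \<mu>1 \<mu>2 (hsub (b # \<tau>) U) = piM U"
    proof (cases b)
      case True
      have "(\<lambda>y. hsub (b # \<tau>) U (Node x y)) = hsub \<tau> U" for x
        using True unfolding hsub_def by simp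
      then have "hat_meas \<mu>1 \<mu>2 (hsub (b # \<tau>) U) = \<mu>1 (\<lambda>x. piM U)"
        using e Cons.IH[OF Cons.prems(1) c(2)] by simp
      then show ?thesis using prob_const[OF p1] by simp
    next
      case False
      have "(\<lambda>y. hsub (b # \<tau>) U (Node x y)) = (\<lambda>y. hsub \<tau> U x)" for x
        using False unfolding hsub_def by simp
      then have "hat_meas \<mu>1 \<mu>2 (hsub (b # \<tau>) U) = \<mu>1 (hsub \<tau> U)"
        using e prob_const[OF p2] by simp
      then show ?thesis using Cons.IH[OF Cons.prems(1) c(1)] by simp
    qed
  qed
qed

definition A where "A x = (\<lambda>b. strict le x b)"
definition B where "B x = (\<lambda>b. strict le b x)"
definition F where "F x = piM (A x)"
definition G where "G x = piM (B x)"
definition SF where "SF = (\<lambda>x. F x = 1)"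
definition SG where "SG = (\<lambda>x. G x = 1)"

lemma A_up: "up (A x)" unfolding up_def A_def using st2 by blast
lemma B_down: "down (B x)" unfolding down_def B_def using st1 by blast

lemma nu0: "hat_meas mu0 mu0 \<in> C" using Chat mu0C by blast

lemma hat00: "bdd_fun f \<Longrightarrow> hat_meas mu0 mu0 f = mu0 (\<lambda>x. mu0 (\<lambda>y. f (Node x y)))"
  by (rule hat_eq)

lemma G01: "G x = 0 \<or> G x = 1"
proof -
  have iv: "invs (B x)" using down_inv B_down by blast
  have "G x = hat_meas mu0 mu0 (ind (B x))" using iv nu0 unfolding invs_def G_def by simp
  also have "\<dots> = mu0 (\<lambda>y. mu0 (\<lambda>z. ind (B x) (Node y z)))" by (simp add: hat00)
  also have "\<dots> \<le> mu0 (\<lambda>y. G x * ind (B x) y)"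
  proof (rule mono01[OF p0])
    fix y
    show "0 \<le> mu0 (\<lambda>z. ind (B x) (Node y z)) \<and> mu0 (\<lambda>z. ind (B x) (Node y z)) \<le> 1"
      by (rule prob_01[OF p0]) simp
    show "0 \<le> G x * ind (B x) y \<and> G x * ind (B x) y \<le> 1"
      using pi01[of "B x"] unfolding G_def ind_def by auto
    show "mu0 (\<lambda>z. ind (B x) (Node y z)) \<le> G x * ind (B x) y"
    proof (cases "B x y")
      case True
      have "mu0 (\<lambda>z. ind (B x) (Node y z)) \<le> mu0 (ind (B x))"
        by (rule mono01[OF p0]) (use st1[OF gr] in \<open>auto simp: ind_def B_def\<close>)
      then show ?thesis using True unfolding G_def piM_def ind_def by simp
    next
      case False
      have "(\<lambda>z. ind (B x) (Node y z)) = (\<lambda>z. 0)"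
        using False st1[OF gl] unfolding ind_def B_def by (auto simp: fun_eq_iff)
      then show ?thesis using False prob_const[OF p0] unfolding ind_def by simp
    qed
  qed
  also have "\<dots> = G x * G x" using prob_scale[OF p0 bdd_ind] unfolding G_def piM_def by simp
  finally show ?thesis using zero_one pi01 unfolding G_def by blast
qed

lemma SF_down: "down SF"
  unfolding down_def SF_def F_def
proof (intro allI impI)
  fix s t assume h: "piM (A t) = 1 \<and> le s t"
  have "piM (A t) \<le> piM (A s)" by (rule pi_mono) (use h st1 in \<open>auto simp: A_def\<close>)
  then show "piM (A s) = 1" using h pi01[of "A s"] by simp
qed

lemma SG_up: "up SG"
  unfolding up_def SG_def G_def
proof (intro allI impI)
  fix s t assume h: "piM (B s) = 1 \<and> le s t"
  have "piM (B s) \<le> piM (B t)" by (rule pi_mono) (use h st2 in \<open>auto simp: B_def\<close>)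
  then show "piM (B t) = 1" using h pi01[of "B t"] by simp
qed

lemma kF01: "piM SF = 0 \<or> piM SF = 1"
proof -
  have iv: "invs SF" using down_inv SF_down by blast
  have "piM SF = hat_meas mu0 mu0 (ind SF)" using iv nu0 unfolding invs_def by simp
  also have "\<dots> = mu0 (\<lambda>x. mu0 (\<lambda>y. ind SF (Node x y)))" by (simp add: hat00)
  also have "\<dots> \<le> mu0 (\<lambda>x. piM SF * ind SF x)"
  proof (rule mono01[OF p0])
    fix x
    show "0 \<le> mu0 (\<lambda>y. ind SF (Node x y)) \<and> mu0 (\<lambda>y. ind SF (Node x y)) \<le> 1"
      by (rule prob_01[OF p0]) simp
    show "0 \<le> piM SF * ind SF x \<and> piM SF * ind SF x \<le> 1"
      using pi01[of SF] unfolding ind_def by auto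
    show "mu0 (\<lambda>y. ind SF (Node x y)) \<le> piM SF * ind SF x"
    proof (cases "SF x")
      case True
      have "mu0 (\<lambda>y. ind SF (Node x y)) \<le> mu0 (ind SF)"
        by (rule mono01[OF p0]) (use SF_down gr in \<open>auto simp: ind_def down_def\<close>)
      then show ?thesis using True unfolding piM_def ind_def by simp
    next
      case False
      have "(\<lambda>y. ind SF (Node x y)) = (\<lambda>y. 0)"
        using False SF_down gl unfolding ind_def down_def by (auto simp: fun_eq_iff)
      then show ?thesis using False prob_const[OF p0] unfolding ind_def by simp
    qed
  qed
  also have "\<dots> = piM SF * piM SF" using prob_scale[OF p0 bdd_ind] unfolding piM_def by simp
  finally show ?thesis using zero_one pi01 by blast
qed

lemma kG: assumes "piM SF \<noteq> 1" shows "piM SG = 1"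
proof -
  have k0: "piM SF = 0" using kF01 assms by blast
  have iv: "invs SG" using up_inv SG_up by blast
  have "1 - piM SF = mu0 (\<lambda>x. mu0 (ind (\<lambda>y. \<not> SF y)))"
    using prob_const[OF p0] pi_compl[of SF] unfolding piM_def by simp
  also have "\<dots> \<le> mu0 (\<lambda>x. mu0 (\<lambda>y. ind SG (Node x y)))"
  proof (rule mono01[OF p0])
    fix x
    show "0 \<le> mu0 (ind (\<lambda>y. \<not> SF y)) \<and> mu0 (ind (\<lambda>y. \<not> SF y)) \<le> 1"
      by (rule prob_01[OF p0]) simp
    show "0 \<le> mu0 (\<lambda>y. ind SG (Node x y)) \<and> mu0 (\<lambda>y. ind SG (Node x y)) \<le> 1"
      by (rule prob_01[OF p0]) simp
    show "mu0 (ind (\<lambda>y. \<not> SF y)) \<le> mu0 (\<lambda>y. ind SG (Node x y))"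
    proof (rule mono01[OF p0])
      fix y
      show "0 \<le> ind (\<lambda>y. \<not> SF y) y \<and> ind (\<lambda>y. \<not> SF y) y \<le> 1" by simp
      show "0 \<le> ind SG (Node x y) \<and> ind SG (Node x y) \<le> 1" by simp
      show "ind (\<lambda>y. \<not> SF y) y \<le> ind SG (Node x y)"
      proof (cases "SF y")
        case True then show ?thesis unfolding ind_def by simp
      next
        case False
        have "piM (\<lambda>z. \<not> A y z) \<le> piM (B (Node x y))"
        proof (rule pi_mono)
          fix z assume "\<not> A y z"
          then have "le z y" using nst unfolding A_def by blast
          then show "B (Node x y) z" using st1 grow unfolding B_def by blast
        qed
        then have "1 - F y \<le> G (Node x y)" using pi_compl unfolding F_def G_def by simp
        moreover have "F y < 1" using False pi01[of "A y"] unfolding SF_def F_def by force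
        ultimately have "G (Node x y) = 1" using G01 by force
        then show ?thesis unfolding ind_def SG_def by simp
      qed
    qed
  qed
  also have "\<dots> = hat_meas mu0 mu0 (ind SG)" by (simp add: hat00)
  also have "\<dots> = piM SG" using iv nu0 unfolding invs_def by simp
  finally show ?thesis using k0 pi01[of SG] by simp
qed

end


context S
begin

lemma cross:
  assumes iS: "invs Sx" and pS: "piM Sx = 1"
    and hR: "\<And>a. Sx a \<Longrightarrow> invs (R a) \<and> piM (R a) = 1"
    and m: "\<mu> \<in> C"
  shows "\<mu> (Ind R (u @ False # v) (u @ True # w)) = 1"
  using m
proof (induction u arbitrary: \<mu>)
  case Nil
  show ?case
  proof (rule GL'[where P = "\<lambda>\<mu>. \<mu> (Ind R ([] @ False # v) ([] @ True # w)) = 1", OF closed_eq _ _ Nil])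
    fix \<mu> \<nu> :: "(tree \<Rightarrow> real) \<Rightarrow> real" and a :: real
    assume "0 \<le> a" "a \<le> 1" "\<mu> (Ind R ([] @ False # v) ([] @ True # w)) = 1" "\<nu> (Ind R ([] @ False # v) ([] @ True # w)) = 1"
    then show "a * \<mu> (Ind R ([] @ False # v) ([] @ True # w)) + (1 - a) * \<nu> (Ind R ([] @ False # v) ([] @ True # w)) = 1"
      by (rule cv_eq)
  next
    fix \<mu>1 \<mu>2 assume c: "\<mu>1 \<in> C" "\<mu>2 \<in> C"
    have p1: "is_prob \<mu>1" and p2: "is_prob \<mu>2" using c CPr by auto
    have e: "hat_meas \<mu>1 \<mu>2 (Ind R ([] @ False # v) ([] @ True # w))
       = \<mu>1 (\<lambda>x. \<mu>2 (\<lambda>y. Ind R (False # v) (True # w) (Node x y)))"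
      by simp (rule hat_eq, rule bdd01, simp)
    have "1 = \<mu>1 (hsub v Sx)" using sub_inv[OF iS c(1)] pS by simp
    also have "\<dots> \<le> \<mu>1 (\<lambda>x. \<mu>2 (\<lambda>y. Ind R (False # v) (True # w) (Node x y)))"
    proof (rule mono01[OF p1])
      fix x
      show "0 \<le> hsub v Sx x \<and> hsub v Sx x \<le> 1" by simp
      show "0 \<le> \<mu>2 (\<lambda>y. Ind R (False # v) (True # w) (Node x y)) \<and> \<mu>2 (\<lambda>y. Ind R (False # v) (True # w) (Node x y)) \<le> 1"
        by (rule prob_01[OF p2]) simp
      show "hsub v Sx x \<le> \<mu>2 (\<lambda>y. Ind R (False # v) (True # w) (Node x y))"
      proof (cases "\<exists>a. subterm x v = Some a \<and> Sx a")
        case True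
        then obtain a where a: "subterm x v = Some a" "Sx a" by blast
        have "(\<lambda>y. Ind R (False # v) (True # w) (Node x y)) = hsub w (R a)"
          using a unfolding Ind_def hsub_def by (auto simp: fun_eq_iff)
        then have "\<mu>2 (\<lambda>y. Ind R (False # v) (True # w) (Node x y)) = 1"
          using sub_inv[OF _ c(2)] hR[OF a(2)] by simp
        then show ?thesis by simp
      next
        case False
        then have "hsub v Sx x = 0" unfolding hsub_def by simp
        then show ?thesis using prob_01[OF p2, of "\<lambda>y. Ind R (False # v) (True # w) (Node x y)"] by simp
      qed
    qed
    finally have "1 \<le> hat_meas \<mu>1 \<mu>2 (Ind R ([] @ False # v) ([] @ True # w))" using e by simp
    moreover have "hat_meas \<mu>1 \<mu>2 (Ind R ([] @ False # v) ([] @ True # w)) \<le> 1"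
      using prob_01[OF CPr[OF Chat[OF c]], of "Ind R ([] @ False # v) ([] @ True # w)"] by simp
    ultimately show "hat_meas \<mu>1 \<mu>2 (Ind R ([] @ False # v) ([] @ True # w)) = 1" by simp
  qed
next
  case (Cons b u)
  let ?I = "Ind R ((b # u) @ False # v) ((b # u) @ True # w)"
  let ?J = "Ind R (u @ False # v) (u @ True # w)"
  show ?case
  proof (rule GL'[where P = "\<lambda>\<mu>. \<mu> ?I = 1", OF closed_eq _ _ Cons.prems])
    fix \<mu> \<nu> :: "(tree \<Rightarrow> real) \<Rightarrow> real" and a :: real
    assume "0 \<le> a" "a \<le> 1" "\<mu> ?I = 1" "\<nu> ?I = 1"
    then show "a * \<mu> ?I + (1 - a) * \<nu> ?I = 1" by (rule cv_eq)
  next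
    fix \<mu>1 \<mu>2 assume c: "\<mu>1 \<in> C" "\<mu>2 \<in> C"
    have p1: "is_prob \<mu>1" and p2: "is_prob \<mu>2" using c CPr by auto
    have e: "hat_meas \<mu>1 \<mu>2 ?I = \<mu>1 (\<lambda>x. \<mu>2 (\<lambda>y. ?I (Node x y)))"
      by (rule hat_eq, rule bdd01, simp)
    show "hat_meas \<mu>1 \<mu>2 ?I = 1"
    proof (cases b)
      case True
      have "(\<lambda>y. ?I (Node x y)) = ?J" for x
        using True unfolding Ind_def by simp
      then have "hat_meas \<mu>1 \<mu>2 ?I = \<mu>1 (\<lambda>x. 1)" using e Cons.IH[OF c(2)] by simp
      then show ?thesis using prob_const[OF p1] by simp
    next
      case False
      have "(\<lambda>y. ?I (Node x y)) = (\<lambda>y. ?J x)" for x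
        using False unfolding Ind_def by simp
      then have "hat_meas \<mu>1 \<mu>2 ?I = \<mu>1 ?J" using e prob_const[OF p2] by simp
      then show ?thesis using Cons.IH[OF c(1)] by simp
    qed
  qed
qed

lemma main:
  "(\<forall>\<mu>\<in>C. \<forall>\<sigma> \<tau>. incompatible \<sigma> \<tau> \<and> lex_less \<sigma> \<tau> \<longrightarrow>
            ae_sub \<mu> \<sigma> \<tau> (\<lambda>a b. strict le a b))
       \<or> (\<forall>\<mu>\<in>C. \<forall>\<sigma> \<tau>. incompatible \<sigma> \<tau> \<and> lex_less \<sigma> \<tau> \<longrightarrow>
            ae_sub \<mu> \<sigma> \<tau> (\<lambda>a b. strict le b a))"
proof (cases "piM SF = 1")
  case True
  have "ae_sub \<mu> \<sigma> \<tau> (\<lambda>a b. strict le a b)"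
    if m: "\<mu> \<in> C" and h: "incompatible \<sigma> \<tau> \<and> lex_less \<sigma> \<tau>" for \<mu> \<sigma> \<tau>
  proof -
    obtain u v w where uv: "\<sigma> = u @ False # v" "\<tau> = u @ True # w" using lex_decomp h by blast
    have "\<mu> (Ind (\<lambda>a b. strict le a b) (u @ False # v) (u @ True # w)) = 1"
    proof (rule cross[OF _ True _ m])
      show "invs SF" using down_inv SF_down by blast
      fix a assume "SF a"
      then show "invs (\<lambda>b. strict le a b) \<and> piM (\<lambda>b. strict le a b) = 1"
        using up_inv[OF A_up[of a]] unfolding SF_def F_def A_def by simp
    qed
    then show ?thesis using uv unfolding ae_sub_def Ind_def by simp
  qed
  then show ?thesis by blast
next
  case False
  have kg: "piM SG = 1" using kG[OF False] .
  have "ae_sub \<mu> \<sigma> \<tau> (\<lambda>a b. strict le b a)"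
    if m: "\<mu> \<in> C" and h: "incompatible \<sigma> \<tau> \<and> lex_less \<sigma> \<tau>" for \<mu> \<sigma> \<tau>
  proof -
    obtain u v w where uv: "\<sigma> = u @ False # v" "\<tau> = u @ True # w" using lex_decomp h by blast
    have "\<mu> (Ind (\<lambda>a b. strict le b a) (u @ False # v) (u @ True # w)) = 1"
    proof (rule cross[OF _ kg _ m])
      show "invs SG" using up_inv SG_up by blast
      fix a assume "SG a"
      then show "invs (\<lambda>b. strict le b a) \<and> piM (\<lambda>b. strict le b a) = 1"
        using down_inv[OF B_down[of a]] unfolding SG_def G_def B_def by simp
    qed
    then show ?thesis using uv unfolding ae_sub_def Ind_def by simp
  qed
  then show ?thesis by blast
qed

end

theorem proposition5p4:
  fixes C :: "((tree \<Rightarrow> real) \<Rightarrow> real) set"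
    and le :: "tree \<Rightarrow> tree \<Rightarrow> bool"
  assumes "minimal_good C"
    and "linear_qo le"
    and "\<And>s t. strict le s (Node s t) \<and> strict le t (Node s t)"
  shows "(\<forall>\<mu>\<in>C. \<forall>\<sigma> \<tau>. incompatible \<sigma> \<tau> \<and> lex_less \<sigma> \<tau> \<longrightarrow>
            ae_sub \<mu> \<sigma> \<tau> (\<lambda>a b. strict le a b))
       \<or> (\<forall>\<mu>\<in>C. \<forall>\<sigma> \<tau>. incompatible \<sigma> \<tau> \<and> lex_less \<sigma> \<tau> \<longrightarrow>
            ae_sub \<mu> \<sigma> \<tau> (\<lambda>a b. strict le b a))"
proof -
  interpret S C le using assms by unfold_locales auto
  show ?thesis by (rule main)
qed

end
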